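(* Let $z\ge 1$ be an integer and let $n[z,1;4]$ be the order of a $[z,1;4]$-mixed cage. Then $$n[z,1;4]\le\begin{cases}3(z+1) & \text{if } z \text{ is odd},\\ 3z+2 & \text{if } z \text{ is even}.\end{cases}$$ Moreover, equality holds for $z\in\{1,2\}$, i.e. $n[1,1;4]=6$ and $n[2,1;4]=8$.
   Context: A mixed graph is a finite simple graph that may contain both edges and arcs. A $[z,r;g]$-mixed graph is a mixed graph in which every vertex is the tail of exactly $z$ arcs, the head of exactly $z$ arcs, and is incident with exactly $r$ edges, and whose girth is $g$. Walks traverse edges in either direction and arcs only in their direction; a cycle is a closed walk with no repeated vertices (other than start = end) and no repeated edge or arc; the girth is the length of a shortest cycle. A $[z,r;g]$-mixed cage is a $[z,r;g]$-mixed graph of minimum order. *)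

theory Defs
  imports Main
begin

text \<open>A finite simple mixed graph on a vertex set V of naturals: E is the (symmetric,
irreflexive) edge relation, A the (irreflexive) arc relation, A u v meaning an arc u -> v.
Simplicity: an unordered pair carries at most one edge or one arc (no edge and arc on the
same pair, no two opposite arcs).\<close>

definition mixed_graph :: "nat set \<Rightarrow> (nat \<Rightarrow> nat \<Rightarrow> bool) \<Rightarrow> (nat \<Rightarrow> nat \<Rightarrow> bool) \<Rightarrow> bool" where
  "mixed_graph V E A \<longleftrightarrow> finite V
     \<and> (\<forall>u v. E u v \<longrightarrow> u \<in> V \<and> v \<in> V)
     \<and> (\<forall>u v. A u v \<longrightarrow> u \<in> V \<and> v \<in> V)
     \<and> (\<forall>u v. E u v \<longleftrightarrow> E v u)
     \<and> (\<forall>u. \<not> E u u \<and> \<not> A u u)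
     \<and> (\<forall>u v. \<not> (E u v \<and> A u v))
     \<and> (\<forall>u v. \<not> (A u v \<and> A v u))"

definition mstep :: "(nat \<Rightarrow> nat \<Rightarrow> bool) \<Rightarrow> (nat \<Rightarrow> nat \<Rightarrow> bool) \<Rightarrow> nat \<Rightarrow> nat \<Rightarrow> bool" where
  "mstep E A u v \<longleftrightarrow> E u v \<or> A u v"

text \<open>A cycle of length k = length vs: the closed walk vs!0, vs!1, ..., vs!(k-1), vs!0,
with no repeated vertex and no repeated edge/arc. For k >= 3 distinct vertices already
force distinct edges/arcs; for k = 2 the two steps must not both use the same edge.\<close>
definition mcycle :: "(nat \<Rightarrow> nat \<Rightarrow> bool) \<Rightarrow> (nat \<Rightarrow> nat \<Rightarrow> bool) \<Rightarrow> nat list \<Rightarrow> bool" where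
  "mcycle E A vs \<longleftrightarrow> length vs \<ge> 2 \<and> distinct vs
     \<and> (\<forall>i < length vs. mstep E A (vs ! i) (vs ! ((i + 1) mod length vs)))
     \<and> (length vs = 2 \<longrightarrow> \<not> (E (vs ! 0) (vs ! 1) \<and> \<not> A (vs ! 0) (vs ! 1) \<and> \<not> A (vs ! 1) (vs ! 0)))"

definition mgirth_is :: "(nat \<Rightarrow> nat \<Rightarrow> bool) \<Rightarrow> (nat \<Rightarrow> nat \<Rightarrow> bool) \<Rightarrow> nat \<Rightarrow> bool" where
  "mgirth_is E A g \<longleftrightarrow> (\<exists>vs. mcycle E A vs \<and> length vs = g)
     \<and> (\<forall>vs. mcycle E A vs \<longrightarrow> length vs \<ge> g)"

definition zrg_mixed_graph :: "nat \<Rightarrow> nat \<Rightarrow> nat \<Rightarrow> nat set \<Rightarrow> (nat \<Rightarrow> nat \<Rightarrow> bool) \<Rightarrow> (nat \<Rightarrow> nat \<Rightarrow> bool) \<Rightarrow> bool" where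
  "zrg_mixed_graph z r g V E A \<longleftrightarrow> mixed_graph V E A
     \<and> (\<forall>u\<in>V. card {v. A u v} = z \<and> card {v. A v u} = z \<and> card {v. E u v} = r)
     \<and> mgirth_is E A g"

definition mixed_cage_order :: "nat \<Rightarrow> nat \<Rightarrow> nat \<Rightarrow> nat" where
  "mixed_cage_order z r g = (LEAST n. \<exists>V E A. zrg_mixed_graph z r g V E A \<and> card V = n)"

end

theory Submission
  imports Defs
begin



lemma mod0_cases:
  fixes x n :: nat
  assumes "x < 3*n" "x mod n = 0"
  shows "x = 0 \<or> x = n \<or> x = 2*n"
proof -
  obtain q where q: "x = n*q" using assms(2) by (metis mod_eq_0_iff_dvd dvd_def)
  have "q < 3" using assms(1) q by (metis mult_less_cancel1 mult.commute)
  then have "q = 0 \<or> q = 1 \<or> q = 2" by auto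
  then show ?thesis using q by auto
qed

lemma d_sum2:
  fixes a b n :: nat
  assumes "a<n" "b<n"
  shows "((b+n-a) mod n + (a+n-b) mod n) mod n = 0"
proof -
  have "((b+n-a) mod n + (a+n-b) mod n) mod n = ((b+n-a) + (a+n-b)) mod n" by (simp add: mod_add_eq)
  also have "(b+n-a) + (a+n-b) = 2*n" using assms by simp
  finally show ?thesis by simp
qed

lemma mod3: fixes x y w n :: nat shows "(x mod n + y mod n + w mod n) mod n = (x+y+w) mod n"
proof -
  have "(x mod n + y mod n + w mod n) mod n = ((x mod n + y mod n) mod n + w mod n) mod n"
    by (rule mod_add_left_eq[symmetric])
  also have "\<dots> = ((x+y) mod n + w mod n) mod n" by (simp add: mod_add_eq)
  also have "\<dots> = (x+y+w) mod n" by (simp add: mod_add_eq)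
  finally show ?thesis .
qed

lemma d_sum3:
  fixes a b c n :: nat
  assumes "a<n" "b<n" "c<n"
  shows "((b+n-a) mod n + (c+n-b) mod n + (a+n-c) mod n) mod n = 0"
proof -
  have "((b+n-a) mod n + (c+n-b) mod n + (a+n-c) mod n) mod n = ((b+n-a) + (c+n-b) + (a+n-c)) mod n"
    by (rule mod3)
  also have "(b+n-a) + (c+n-b) + (a+n-c) = 3*n" using assms by simp
  finally show ?thesis by simp
qed

lemma L1:
  fixes u s n :: nat
  assumes "u<n" "s<n"
  shows "((u+s) mod n + n - u) mod n = s"
proof (cases "u+s < n")
  case True then show ?thesis using assms by simp
next
  case False
  then have "(u+s) mod n = u+s-n" using assms by (simp add: le_mod_geq)
  then show ?thesis using assms False by simp
qed

lemma L2:
  fixes u v n :: nat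
  assumes "u<n" "v<n"
  shows "(u + (v+n-u) mod n) mod n = v"
proof -
  have "(u + (v+n-u) mod n) mod n = (u + (v+n-u)) mod n" by (simp add: mod_add_right_eq)
  also have "u + (v+n-u) = v + n" using assms by simp
  finally show ?thesis using assms by simp
qed

lemma L3:
  fixes u s n :: nat
  assumes "u<n" "s<n"
  shows "(u + n - (u+n-s) mod n) mod n = s"
proof (cases "s \<le> u")
  case True
  then have "(u+n-s) mod n = u - s" using assms
    by (metis add.commute add_diff_assoc le_mod_geq less_imp_diff_less mod_add_self2 mod_less)
  then show ?thesis using assms True by simp
next
  case False
  then have "(u+n-s) mod n = u+n-s" using assms by simp
  then show ?thesis using assms False by simp
qed

lemma dd1: fixes u v n :: nat shows "u \<le> v \<Longrightarrow> v < n \<Longrightarrow> (v+n-u) mod n = v - u"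
  by (metis add.commute add_diff_assoc diff_le_self le_less_trans mod_add_self2 mod_less)
lemma dd2: fixes u v n :: nat shows "v < u \<Longrightarrow> u < n \<Longrightarrow> (v+n-u) mod n = v + n - u"
  by simp

lemma all3: "(\<forall>i<(3::nat). P i) \<longleftrightarrow> P 0 \<and> P 1 \<and> P 2"
  by (auto simp: numeral_eq_Suc less_Suc_eq)
lemma all4: "(\<forall>i<(4::nat). P i) \<longleftrightarrow> P 0 \<and> P 1 \<and> P 2 \<and> P 3"
  by (auto simp: numeral_eq_Suc less_Suc_eq)


definition cA :: "nat \<Rightarrow> nat set \<Rightarrow> nat \<Rightarrow> nat \<Rightarrow> bool" where
  "cA n S u v \<longleftrightarrow> u < n \<and> v < n \<and> (v + n - u) mod n \<in> S"
definition cE :: "nat \<Rightarrow> nat \<Rightarrow> nat \<Rightarrow> nat \<Rightarrow> bool" where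
  "cE n m u v \<longleftrightarrow> u < n \<and> v < n \<and> (v + n - u) mod n = m"

lemma no_2cycle:
  assumes "mixed_graph V E A" "mcycle E A vs" "length vs = 2"
  shows False
proof -
  let ?a = "vs!0" and ?b = "vs!1"
  have all: "\<forall>i<2. mstep E A (vs!i) (vs!((i+1) mod 2))" using assms(2,3) unfolding mcycle_def by metis
  have s1: "mstep E A ?a ?b" using all[rule_format, of 0] by simp
  have s2: "mstep E A ?b ?a" using all[rule_format, of 1] by simp
  have c: "\<not> (E ?a ?b \<and> \<not> A ?a ?b \<and> \<not> A ?b ?a)" using assms(2,3) unfolding mcycle_def by auto
  from assms(1) have g: "(\<forall>u v. E u v \<longleftrightarrow> E v u)" "(\<forall>u v. \<not> (E u v \<and> A u v))" "(\<forall>u v. \<not> (A u v \<and> A v u))"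
    unfolding mixed_graph_def by auto
  show False using s1 s2 c g unfolding mstep_def by metis
qed

lemma construction:
  fixes n m :: nat and S :: "nat set" and cyc :: "nat list"
  assumes nm: "n = 2*m" and m0: "m > 0" and fS: "finite S"
    and Sb: "\<forall>s\<in>S. 0 < s \<and> s < n \<and> s \<noteq> m"
    and P4: "\<forall>x\<in>S. \<forall>y\<in>S. (x+y) mod n \<noteq> 0"
    and P3: "\<forall>x\<in>insert m S. \<forall>y\<in>insert m S. \<forall>w\<in>insert m S. (x+y+w) mod n \<noteq> 0"
    and cyc: "mcycle (cE n m) (cA n S) cyc" "length cyc = 4"
  shows "zrg_mixed_graph (card S) 1 4 {..<n} (cE n m) (cA n S)"
proof -
  have n0: "n > 0" "m < n" using nm m0 by auto
  have esym: "cE n m u v \<longleftrightarrow> cE n m v u" for u v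
  proof -
    have *: "(v + n - u) mod n = m" if "u < n" "v < n" "(u + n - v) mod n = m" for u v
    proof -
      have h1: "(m + (v+n-u) mod n) mod n = 0" using d_sum2[OF that(2,1)] that(3) by simp
      have h2: "m + (v+n-u) mod n < 3*n" using n0 by (metis add_less_mono mod_less_divisor nm mult_2 mult_Suc numeral_3_eq_3 trans_less_add1 less_trans)
      have "m + (v+n-u) mod n = 0 \<or> m + (v+n-u) mod n = n \<or> m + (v+n-u) mod n = 2*n"
        by (rule mod0_cases[OF h2 h1])
      moreover have "(v+n-u) mod n < n" using n0 by simp
      moreover have "\<And>d. m + d = 0 \<or> m+d = n \<or> m+d = 2*n \<Longrightarrow> d < n \<Longrightarrow> d = m" using nm m0 by auto
      ultimately show ?thesis by blast
    qed
    show ?thesis unfolding cE_def using * by blast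
  qed
  have i1: "\<forall>u v. cE n m u v \<longrightarrow> u \<in> {..<n} \<and> v \<in> {..<n}" by (simp add: cE_def)
  have i2: "\<forall>u v. cA n S u v \<longrightarrow> u \<in> {..<n} \<and> v \<in> {..<n}" by (simp add: cA_def)
  have i3: "\<forall>u v. cE n m u v \<longleftrightarrow> cE n m v u" using esym by blast
  have i4: "\<forall>u. \<not> cE n m u u \<and> \<not> cA n S u u" using m0 Sb by (auto simp: cE_def cA_def)
  have i5: "\<forall>u v. \<not> (cE n m u v \<and> cA n S u v)" using Sb by (auto simp: cE_def cA_def)
  have i6: "\<forall>u v. \<not> (cA n S u v \<and> cA n S v u)"
  proof (intro allI notI)
    fix u v assume "cA n S u v \<and> cA n S v u"
    then have "u < n" "v < n" "(v + n - u) mod n \<in> S" "(u + n - v) mod n \<in> S" by (auto simp: cA_def)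
    then show False using P4 d_sum2[of u n v] by metis
  qed
  have mg: "mixed_graph {..<n} (cE n m) (cA n S)"
    unfolding mixed_graph_def using i1 i2 i3 i4 i5 i6 by blast
  have outN: "{v. cA n S u v} = (\<lambda>s. (u+s) mod n) ` S" if "u < n" for u
  proof (intro set_eqI iffI)
    fix v assume "v \<in> {v. cA n S u v}"
    then have "v < n" "(v+n-u) mod n \<in> S" by (auto simp: cA_def)
    then show "v \<in> (\<lambda>s. (u+s) mod n) ` S" using L2[OF that \<open>v<n\<close>] by (metis image_eqI)
  next
    fix v assume "v \<in> (\<lambda>s. (u+s) mod n) ` S"
    then obtain s where "s \<in> S" "v = (u+s) mod n" by auto
    then show "v \<in> {v. cA n S u v}" using L1[OF that, of s] Sb that n0 by (auto simp: cA_def)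
  qed
  have outC: "card {v. cA n S u v} = card S" if "u < n" for u
  proof -
    have "inj_on (\<lambda>s. (u+s) mod n) S"
      by (rule inj_onI) (metis L1 Sb that)
    then show ?thesis using outN[OF that] by (simp add: card_image)
  qed
  have inN: "{v. cA n S v u} = (\<lambda>s. (u+n-s) mod n) ` S" if "u < n" for u
  proof (intro set_eqI iffI)
    fix v assume "v \<in> {v. cA n S v u}"
    then have "v < n" "(u+n-v) mod n \<in> S" by (auto simp: cA_def)
    then show "v \<in> (\<lambda>s. (u+n-s) mod n) ` S" using L3[OF that \<open>v<n\<close>] by (metis image_eqI)
  next
    fix v assume "v \<in> (\<lambda>s. (u+n-s) mod n) ` S"
    then obtain s where "s \<in> S" "v = (u+n-s) mod n" by auto
    then show "v \<in> {v. cA n S v u}" using L3[OF that, of s] Sb that n0 by (auto simp: cA_def)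
  qed
  have inC: "card {v. cA n S v u} = card S" if "u < n" for u
  proof -
    have "inj_on (\<lambda>s. (u+n-s) mod n) S"
      by (rule inj_onI) (metis L3 Sb that)
    then show ?thesis using inN[OF that] by (simp add: card_image)
  qed
  have eN: "{v. cE n m u v} = {(u+m) mod n}" if "u < n" for u
  proof (intro set_eqI iffI)
    fix v assume "v \<in> {v. cE n m u v}"
    then have "v < n" "(v+n-u) mod n = m" by (auto simp: cE_def)
    then show "v \<in> {(u+m) mod n}" using L2[OF that \<open>v<n\<close>] by simp
  next
    fix v assume "v \<in> {(u+m) mod n}"
    then show "v \<in> {v. cE n m u v}" using L1[OF that n0(2)] that n0 by (auto simp: cE_def)
  qed
  have girth: "mgirth_is (cE n m) (cA n S) 4"
    unfolding mgirth_is_def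
  proof (intro conjI allI impI)
    show "\<exists>vs. mcycle (cE n m) (cA n S) vs \<and> length vs = 4" using cyc by blast
  next
    fix vs assume cy: "mcycle (cE n m) (cA n S) vs"
    then have l2: "length vs \<ge> 2" by (simp add: mcycle_def)
    show "length vs \<ge> 4"
    proof (rule ccontr)
      assume "\<not> 4 \<le> length vs"
      then have "length vs = 2 \<or> length vs = 3" using l2 by auto
      then show False
      proof
        assume "length vs = 2" then show False using no_2cycle[OF mg cy] by simp
      next
        assume l3: "length vs = 3"
        have st: "\<forall>i<3. mstep (cE n m) (cA n S) (vs ! i) (vs ! ((i + 1) mod 3))"
          using cy l3 by (simp add: mcycle_def)
        have s01: "mstep (cE n m) (cA n S) (vs!0) (vs!1)" using st[rule_format, of 0] by simp
        have s12: "mstep (cE n m) (cA n S) (vs!1) (vs!2)" using st[rule_format, of 1] by (simp add: numeral_2_eq_2)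
        have s20: "mstep (cE n m) (cA n S) (vs!2) (vs!0)" using st[rule_format, of 2] by simp
        let ?a = "vs!0" and ?b = "vs!1" and ?c = "vs!2"
        have lt: "?a < n" "?b < n" "?c < n" using s01 s12 unfolding mstep_def cE_def cA_def by auto
        have d1: "(?b+n-?a) mod n \<in> insert m S" using s01 unfolding mstep_def cE_def cA_def by auto
        have d2: "(?c+n-?b) mod n \<in> insert m S" using s12 unfolding mstep_def cE_def cA_def by auto
        have d3: "(?a+n-?c) mod n \<in> insert m S" using s20 unfolding mstep_def cE_def cA_def by auto
        show False using P3 d1 d2 d3 d_sum3[OF lt] by metis
      qed
    qed
  qed
  show ?thesis unfolding zrg_mixed_graph_def
    using mg girth outC inC eN by auto
qed


lemma even_constr:
  fixes k :: nat
  assumes k: "k \<ge> 1"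
  shows "\<exists>V E A. zrg_mixed_graph (2*k) 1 4 V E A \<and> card V = 6*k+2"
proof -
  define m where "m = 3*k+1"
  define n where "n = 2*m"
  define S where "S = {1..k} \<union> {m+1..m+k}"
  have cS: "card S = 2*k" unfolding S_def m_def by (subst card_Un_disjoint) auto
  have mem: "x \<in> insert m S \<longleftrightarrow> x = m \<or> (1 \<le> x \<and> x \<le> k) \<or> (m+1 \<le> x \<and> x \<le> m+k)" for x
    unfolding S_def by auto
  have Sb: "\<forall>s\<in>S. 0 < s \<and> s < n \<and> s \<noteq> m" unfolding S_def n_def m_def by auto
  have P4: "\<forall>x\<in>S. \<forall>y\<in>S. (x+y) mod n \<noteq> 0"
  proof (intro ballI notI)
    fix x y assume xy: "x \<in> S" "y \<in> S" "(x+y) mod n = 0"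
    have "x < n" "y < n" using xy Sb by auto
    then have "x+y < 3*n" by linarith
    then have "x+y = 0 \<or> x+y = n \<or> x+y = 2*n" by (rule mod0_cases[OF _ xy(3)])
    then show False using xy(1,2) unfolding S_def n_def m_def by auto
  qed
  have P3: "\<forall>x\<in>insert m S. \<forall>y\<in>insert m S. \<forall>w\<in>insert m S. (x+y+w) mod n \<noteq> 0"
  proof (intro ballI notI)
    fix x y w assume xy: "x \<in> insert m S" "y \<in> insert m S" "w \<in> insert m S" "(x+y+w) mod n = 0"
    have "m < n" unfolding n_def m_def by simp
    then have "x < n" "y < n" "w < n" using xy(1-3) Sb by auto
    then have "x+y+w < 3*n" by linarith
    then have "x+y+w = 0 \<or> x+y+w = n \<or> x+y+w = 2*n" by (rule mod0_cases[OF _ xy(4)])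
    moreover have "x = m \<or> x \<in> S" "y = m \<or> y \<in> S" "w = m \<or> w \<in> S" using xy(1-3) by auto
    ultimately show False unfolding S_def n_def m_def by auto
  qed
  have cyc: "mcycle (cE n m) (cA n S) [0, k, 2*k, 3*k]"
    unfolding mcycle_def
  proof (intro conjI)
    show "2 \<le> length [0, k, 2*k, 3*k]" by simp
    show "distinct [0, k, 2*k, 3*k]" using k by simp
    show "length [0, k, 2 * k, 3 * k] = 2 \<longrightarrow> \<not> (cE n m ([0, k, 2 * k, 3 * k] ! 0) ([0, k, 2 * k, 3 * k] ! 1) \<and> \<not> cA n S ([0, k, 2 * k, 3 * k] ! 0) ([0, k, 2 * k, 3 * k] ! 1) \<and> \<not> cA n S ([0, k, 2 * k, 3 * k] ! 1) ([0, k, 2 * k, 3 * k] ! 0))" by simp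
    have lt: "0 < n" "k < n" "2*k < n" "3*k < n" unfolding n_def m_def by auto
    have a1: "cA n S 0 k" using lt dd1[of 0 k n] unfolding cA_def S_def using k by simp
    have a2: "cA n S k (2*k)" using lt dd1[of k "2*k" n] unfolding cA_def S_def using k by simp
    have a3: "cA n S (2*k) (3*k)" using lt dd1[of "2*k" "3*k" n] unfolding cA_def S_def using k by simp
    have a4: "cA n S (3*k) 0" using lt dd2[of 0 "3*k" n] k unfolding cA_def S_def n_def m_def by simp
    show "\<forall>i<length [0, k, 2 * k, 3 * k].
       mstep (cE n m) (cA n S) ([0, k, 2 * k, 3 * k] ! i) ([0, k, 2 * k, 3 * k] ! ((i + 1) mod length [0, k, 2 * k, 3 * k]))" (is "\<forall>i<_. ?P i")
    proof (intro allI impI)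
      fix i :: nat assume "i < length [0, k, 2 * k, 3 * k]"
      then have "i = 0 \<or> i = 1 \<or> i = 2 \<or> i = 3" by auto
      then show "?P i" using a1 a2 a3 a4 by (auto simp: mstep_def)
    qed
  qed
  have "zrg_mixed_graph (card S) 1 4 {..<n} (cE n m) (cA n S)"
    by (rule construction[OF n_def _ _ Sb P4 P3 cyc]) (auto simp: m_def S_def)
  moreover have "card {..<n} = 6*k+2" unfolding n_def m_def by simp
  ultimately show ?thesis using cS by metis
qed

lemma odd_constr:
  fixes k :: nat
  shows "\<exists>V E A. zrg_mixed_graph (2*k+1) 1 4 V E A \<and> card V = 6*k+6"
proof -
  define m where "m = 3*k+3"
  define n where "n = 2*m"
  define S where "S = insert (k+1) ({1..k} \<union> {m+1..m+k})"
  have cS: "card S = 2*k+1" unfolding S_def m_def by (subst card_insert_disjoint, simp, simp, subst card_Un_disjoint) auto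
  have mem: "x \<in> insert m S \<longleftrightarrow> x = m \<or> x = k+1 \<or> (1 \<le> x \<and> x \<le> k) \<or> (m+1 \<le> x \<and> x \<le> m+k)" for x
    unfolding S_def by auto
  have Sb: "\<forall>s\<in>S. 0 < s \<and> s < n \<and> s \<noteq> m" unfolding S_def n_def m_def by auto
  have P4: "\<forall>x\<in>S. \<forall>y\<in>S. (x+y) mod n \<noteq> 0"
  proof (intro ballI notI)
    fix x y assume xy: "x \<in> S" "y \<in> S" "(x+y) mod n = 0"
    have "x < n" "y < n" using xy Sb by auto
    then have "x+y < 3*n" by linarith
    then have "x+y = 0 \<or> x+y = n \<or> x+y = 2*n" by (rule mod0_cases[OF _ xy(3)])
    then show False using xy(1,2) unfolding S_def n_def m_def by auto
  qed
  have P3: "\<forall>x\<in>insert m S. \<forall>y\<in>insert m S. \<forall>w\<in>insert m S. (x+y+w) mod n \<noteq> 0"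
  proof (intro ballI notI)
    fix x y w assume xy: "x \<in> insert m S" "y \<in> insert m S" "w \<in> insert m S" "(x+y+w) mod n = 0"
    have "m < n" unfolding n_def m_def by simp
    then have "x < n" "y < n" "w < n" using xy(1-3) Sb by auto
    then have "x+y+w < 3*n" by linarith
    then have "x+y+w = 0 \<or> x+y+w = n \<or> x+y+w = 2*n" by (rule mod0_cases[OF _ xy(4)])
    moreover have "x = m \<or> x \<in> S" "y = m \<or> y \<in> S" "w = m \<or> w \<in> S" using xy(1-3) by auto
    ultimately show False unfolding S_def n_def m_def by auto
  qed
  have cyc: "mcycle (cE n m) (cA n S) [0, k+1, 2*k+2, 3*k+3]"
    unfolding mcycle_def
  proof (intro conjI)
    show "2 \<le> length [0, k+1, 2*k+2, 3*k+3]" by simp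
    show "distinct [0, k+1, 2*k+2, 3*k+3]" by simp
    show "length [0, k+1, 2*k+2, 3*k+3] = 2 \<longrightarrow> \<not> (cE n m ([0, k+1, 2*k+2, 3*k+3] ! 0) ([0, k+1, 2*k+2, 3*k+3] ! 1) \<and> \<not> cA n S ([0, k+1, 2*k+2, 3*k+3] ! 0) ([0, k+1, 2*k+2, 3*k+3] ! 1) \<and> \<not> cA n S ([0, k+1, 2*k+2, 3*k+3] ! 1) ([0, k+1, 2*k+2, 3*k+3] ! 0))" by simp
    have lt: "0 < n" "k+1 < n" "2*k+2 < n" "3*k+3 < n" unfolding n_def m_def by auto
    have a1: "cA n S 0 (k+1)" using lt dd1[of 0 "k+1" n] unfolding cA_def S_def by simp
    have a2: "cA n S (k+1) (2*k+2)" using lt dd1[of "k+1" "2*k+2" n] unfolding cA_def S_def by simp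
    have a3: "cA n S (2*k+2) (3*k+3)" using lt dd1[of "2*k+2" "3*k+3" n] unfolding cA_def S_def by simp
    have a4: "cE n m (3*k+3) 0" using lt dd2[of 0 "3*k+3" n] unfolding cE_def n_def m_def by simp
    show "\<forall>i<length [0, k+1, 2*k+2, 3*k+3].
       mstep (cE n m) (cA n S) ([0, k+1, 2*k+2, 3*k+3] ! i) ([0, k+1, 2*k+2, 3*k+3] ! ((i + 1) mod length [0, k+1, 2*k+2, 3*k+3]))" (is "\<forall>i<_. ?P i")
    proof (intro allI impI)
      fix i :: nat assume "i < length [0, k+1, 2*k+2, 3*k+3]"
      then have "i = 0 \<or> i = 1 \<or> i = 2 \<or> i = 3" by auto
      then show "?P i" using a1 a2 a3 a4 by (auto simp: mstep_def)
    qed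
  qed
  have "zrg_mixed_graph (card S) 1 4 {..<n} (cE n m) (cA n S)"
    by (rule construction[OF n_def _ _ Sb P4 P3 cyc]) (auto simp: m_def S_def)
  moreover have "card {..<n} = 6*k+6" unfolding n_def m_def by simp
  ultimately show ?thesis using cS by metis
qed



lemma even_card:
  assumes "finite V" "\<forall>u\<in>V. card {v. E u v} = 1" "\<forall>u\<in>V. \<forall>v. E u v \<longrightarrow> v \<in> V"
    "\<forall>u v. E u v \<longleftrightarrow> E v u" "\<forall>u. \<not> E u u"
  shows "even (card V)"
  using assms
proof (induction "card V" arbitrary: V rule: less_induct)
  case less
  show ?case
  proof (cases "V = {}")
    case True then show ?thesis by simp
  next
    case False
    then obtain u where u: "u \<in> V" by auto
    obtain p where p: "{v. E u v} = {p}" using less.prems(2) u by (metis card_1_singletonE)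
    have Eup: "E u p" using p by auto
    have pV: "p \<in> V" using Eup less.prems(3) u by blast
    have pu: "p \<noteq> u" using Eup less.prems(5) by auto
    obtain q where q: "{v. E p v} = {q}" using less.prems(2) pV by (metis card_1_singletonE)
    have qu: "q = u" using q Eup less.prems(4) by auto
    define V' where "V' = V - {u,p}"
    have sub: "{u,p} \<subseteq> V" using u pV by auto
    have cV': "card V' = card V - 2" unfolding V'_def using sub pu less.prems(1)
      by (simp add: card_Diff_subset finite_subset)
    have lt: "card V' < card V" using cV' less.prems(1) False by (simp add: card_gt_0_iff)
    have cl: "\<forall>w\<in>V'. \<forall>v. E w v \<longrightarrow> v \<in> V'"
    proof (intro ballI allI impI)
      fix w v assume wV: "w \<in> V'" and Ewv: "E w v"
      have wn: "w \<noteq> u" "w \<noteq> p" "w \<in> V" using wV unfolding V'_def by auto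
      have vV: "v \<in> V" using Ewv less.prems(3) wn by blast
      have "v \<noteq> u"
      proof
        assume "v = u" then have "E u w" using Ewv less.prems(4) by auto
        then have "w = p" using p by auto
        then show False using wn by simp
      qed
      moreover have "v \<noteq> p"
      proof
        assume "v = p" then have "E p w" using Ewv less.prems(4) by auto
        then have "w = q" using q by auto
        then show False using wn qu by simp
      qed
      ultimately show "v \<in> V'" using vV unfolding V'_def by auto
    qed
    have f': "finite V'" using less.prems(1) unfolding V'_def by simp
    have c1': "\<forall>w\<in>V'. card {v. E w v} = 1" using less.prems(2) unfolding V'_def by auto
    have "even (card V')"
      by (rule less.hyps[OF lt f' c1' cl less.prems(4) less.prems(5)])
    moreover have "card {u,p} = 2" using pu by simp
    moreover have "card {u,p} \<le> card V" using card_mono[OF less.prems(1) sub] .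
    ultimately have "card V = card V' + 2" using cV' by linarith
    then show ?thesis using \<open>even (card V')\<close> by simp
  qed
qed

lemma all3': "(\<forall>i<(3::nat). P i) \<longleftrightarrow> P 0 \<and> P 1 \<and> P 2"
  by (auto simp: numeral_eq_Suc less_Suc_eq)

lemma triangle:
  assumes "mgirth_is E A 4" "mstep E A a b" "mstep E A b c" "mstep E A c a" "distinct [a,b,c]"
  shows False
proof -
  have st: "\<forall>i<3. mstep E A ([a,b,c] ! i) ([a,b,c] ! ((i + 1) mod 3))"
  proof (intro allI impI)
    fix i :: nat assume "i < 3"
    then have "i = 0 \<or> i = 1 \<or> i = 2" by auto
    then show "mstep E A ([a,b,c] ! i) ([a,b,c] ! ((i + 1) mod 3))" using assms(2-4) by auto
  qed
  have "mcycle E A [a,b,c]" unfolding mcycle_def using assms(5) st by simp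
  then show False using assms(1) unfolding mgirth_is_def by fastforce
qed


lemma graph_facts:
  assumes "zrg_mixed_graph z 1 4 V E A"
  shows "finite V" "\<forall>u v. E u v \<longrightarrow> u \<in> V \<and> v \<in> V" "\<forall>u v. A u v \<longrightarrow> u \<in> V \<and> v \<in> V"
    "\<forall>u v. E u v \<longleftrightarrow> E v u" "\<forall>u. \<not> E u u \<and> \<not> A u u" "\<forall>u v. \<not> (E u v \<and> A u v)"
    "\<forall>u v. \<not> (A u v \<and> A v u)"
    "\<forall>u\<in>V. card {v. A u v} = z \<and> card {v. A v u} = z \<and> card {v. E u v} = 1"
    "mgirth_is E A 4" "V \<noteq> {}" "even (card V)"
proof -
  show f: "finite V" "\<forall>u v. E u v \<longrightarrow> u \<in> V \<and> v \<in> V" "\<forall>u v. A u v \<longrightarrow> u \<in> V \<and> v \<in> V"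
    "\<forall>u v. E u v \<longleftrightarrow> E v u" "\<forall>u. \<not> E u u \<and> \<not> A u u" "\<forall>u v. \<not> (E u v \<and> A u v)"
    "\<forall>u v. \<not> (A u v \<and> A v u)"
    "\<forall>u\<in>V. card {v. A u v} = z \<and> card {v. A v u} = z \<and> card {v. E u v} = 1"
    "mgirth_is E A 4" using assms unfolding zrg_mixed_graph_def mixed_graph_def by auto
  obtain vs where vs: "mcycle E A vs" "length vs = 4" using f(9) unfolding mgirth_is_def by auto
  then have "\<forall>i<length vs. mstep E A (vs ! i) (vs ! ((i + 1) mod length vs))" unfolding mcycle_def by blast
  from this[rule_format, of 0] have "mstep E A (vs!0) (vs!1)" using vs(2) by simp
  then show "V \<noteq> {}" using f(2,3) unfolding mstep_def by auto
  show "even (card V)"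
    by (rule even_card) (use f in auto)
qed

lemma lb1:
  assumes G: "zrg_mixed_graph 1 1 4 V E A"
  shows "card V \<ge> 6"
proof -
  note f = graph_facts[OF G]
  obtain u where u: "u \<in> V" using f(10) by auto
  obtain a where a: "{v. A u v} = {a}" using f(8) u by (metis card_1_singletonE)
  obtain b where b: "{v. A v u} = {b}" using f(8) u by (metis card_1_singletonE)
  obtain c where c: "{v. E u v} = {c}" using f(8) u by (metis card_1_singletonE)
  have Aua: "A u a" and Abu: "A b u" and Euc: "E u c" using a b c by auto
  have V: "a \<in> V" "b \<in> V" "c \<in> V" using Aua Abu Euc f(2,3) by auto
  have d: "a \<noteq> u" "b \<noteq> u" "c \<noteq> u" "a \<noteq> b" "a \<noteq> c" "b \<noteq> c"
    using Aua Abu Euc f(4,5,6,7) by metis+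
  have c4: "card {u,a,b,c} = 4" using d by auto
  have sub: "{u,a,b,c} \<subseteq> V" using u V by auto
  have ge4: "card V \<ge> 4" using card_mono[OF f(1) sub] c4 by simp
  show ?thesis
  proof (rule ccontr)
    assume "\<not> 6 \<le> card V"
    then have "card V = 4" using ge4 f(11) by presburger
    then have Veq: "{u,a,b,c} = V" using card_subset_eq[OF f(1) sub] c4 by simp
    obtain e where e: "{v. E a v} = {e}" using f(8) V(1) by (metis card_1_singletonE)
    have Eae: "E a e" using e by auto
    have "e \<in> V" using Eae f(2) by auto
    moreover have "e \<noteq> a" using Eae f(5) by auto
    moreover have "e \<noteq> u"
    proof
      assume "e = u" then have "E u a" using Eae f(4) by auto
      then show False using c d by auto
    qed
    moreover have "e \<noteq> c"
    proof
      assume "e = c"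
      obtain g where g: "{v. E c v} = {g}" using f(8) V(3) by (metis card_1_singletonE)
      have "E c u" "E c a" using Euc Eae \<open>e = c\<close> f(4) by auto
      then have "u \<in> {v. E c v}" "a \<in> {v. E c v}" by simp_all
      then have "u = g" "a = g" unfolding g by simp_all
      then show False using d by simp
    qed
    ultimately have "e = b" using Veq by auto
    then have "E a b" using Eae by simp
    then show False
      using triangle[OF f(9), of u a b] Aua Abu d unfolding mstep_def by auto
  qed
qed

lemma lb2:
  assumes G: "zrg_mixed_graph 2 1 4 V E A"
  shows "card V \<ge> 8"
proof -
  note f = graph_facts[OF G]
  obtain u where u: "u \<in> V" using f(10) by auto
  obtain a1 a2 where a: "{v. A u v} = {a1,a2}" "a1 \<noteq> a2" using f(8) u by (metis card_2_iff)
  obtain b1 b2 where b: "{v. A v u} = {b1,b2}" "b1 \<noteq> b2" using f(8) u by (metis card_2_iff)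
  obtain c where c: "{v. E u v} = {c}" using f(8) u by (metis card_1_singletonE)
  have Aua: "A u a1" "A u a2" and Abu: "A b1 u" "A b2 u" and Euc: "E u c" using a b c by auto
  have V: "a1 \<in> V" "a2 \<in> V" "b1 \<in> V" "b2 \<in> V" "c \<in> V" using Aua Abu Euc f(2,3) by auto
  have d: "a1 \<noteq> u" "a2 \<noteq> u" "b1 \<noteq> u" "b2 \<noteq> u" "c \<noteq> u"
    "a1 \<noteq> b1" "a1 \<noteq> b2" "a2 \<noteq> b1" "a2 \<noteq> b2" "a1 \<noteq> c" "a2 \<noteq> c" "b1 \<noteq> c" "b2 \<noteq> c"
    using Aua Abu Euc f(4,5,6,7) by metis+
  have c6: "card {u,a1,a2,b1,b2,c} = 6" using d a(2) b(2) by auto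
  have sub: "{u,a1,a2,b1,b2,c} \<subseteq> V" using u V by auto
  have ge6: "card V \<ge> 6" using card_mono[OF f(1) sub] c6 by simp
  show ?thesis
  proof (rule ccontr)
    assume "\<not> 8 \<le> card V"
    then have "card V = 6" using ge6 f(11) by presburger
    then have Veq: "{u,a1,a2,b1,b2,c} = V" using card_subset_eq[OF f(1) sub] c6 by simp
    have tri: "\<not> mstep E A a1 bj" if "bj = b1 \<or> bj = b2" for bj
    proof
      assume "mstep E A a1 bj"
      then show False using triangle[OF f(9), of u a1 bj] Aua Abu that d unfolding mstep_def by auto
    qed
    obtain e where e: "{v. E a1 v} = {e}" using f(8) V(1) by (metis card_1_singletonE)
    have Eae: "E a1 e" using e by auto
    have "e \<in> V" using Eae f(2) by auto
    moreover have "e \<noteq> a1" using Eae f(5) by auto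
    moreover have "e \<noteq> u"
    proof
      assume "e = u" then have "E u a1" using Eae f(4) by auto
      then show False using c d by auto
    qed
    moreover have "e \<noteq> c"
    proof
      assume "e = c"
      obtain g where g: "{v. E c v} = {g}" using f(8) V(5) by (metis card_1_singletonE)
      have "E c u" "E c a1" using Euc Eae \<open>e = c\<close> f(4) by auto
      then have "u \<in> {v. E c v}" "a1 \<in> {v. E c v}" by simp_all
      then have "u = g" "a1 = g" unfolding g by simp_all
      then show False using d by simp
    qed
    moreover have "e \<noteq> b1" "e \<noteq> b2" using tri Eae unfolding mstep_def by auto
    ultimately have "e = a2" using Veq by auto
    then have Ea12: "E a1 a2" using Eae by simp
    have "{v. A a1 v} \<subseteq> {c}"
    proof
      fix v assume "v \<in> {v. A a1 v}"
      then have Av: "A a1 v" by simp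
      then have "v \<in> V" using f(3) by auto
      moreover have "v \<noteq> a1" using Av f(5) by auto
      moreover have "v \<noteq> u" using Av Aua f(7) by auto
      moreover have "v \<noteq> a2" using Av Ea12 f(6) by auto
      moreover have "v \<noteq> b1" "v \<noteq> b2" using tri Av unfolding mstep_def by auto
      ultimately show "v \<in> {c}" using Veq by auto
    qed
    then have "card {v. A a1 v} \<le> card {c}" by (intro card_mono) auto
    then have "card {v. A a1 v} \<le> 1" by simp
    then show False using f(8) V(1) by auto
  qed
qed


theorem theorem9:
  fixes z :: nat
  assumes "z \<ge> 1"
  shows "mixed_cage_order z 1 4 \<le> (if odd z then 3 * (z + 1) else 3 * z + 2)
         \<and> mixed_cage_order 1 1 4 = 6 \<and> mixed_cage_order 2 1 4 = 8"
proof (intro conjI)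
  show "mixed_cage_order z 1 4 \<le> (if odd z then 3 * (z + 1) else 3 * z + 2)"
  proof (cases "odd z")
    case True
    then obtain k where k: "z = 2*k+1" by (metis oddE)
    obtain V E A where G: "zrg_mixed_graph (2*k+1) 1 4 V E A" "card V = 6*k+6" using odd_constr by blast
    have "mixed_cage_order z 1 4 \<le> 6*k+6" unfolding mixed_cage_order_def
      by (rule Least_le) (use G k in blast)
    then show ?thesis using True k by simp
  next
    case False
    then obtain k where k: "z = 2*k" by (metis evenE)
    have k1: "k \<ge> 1" using assms k by simp
    obtain V E A where G: "zrg_mixed_graph (2*k) 1 4 V E A" "card V = 6*k+2" using even_constr[OF k1] by blast
    have "mixed_cage_order z 1 4 \<le> 6*k+2" unfolding mixed_cage_order_def
      by (rule Least_le) (use G k in blast)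
    then show ?thesis using False k by simp
  qed
next
  obtain V E A where G: "zrg_mixed_graph (2*0+1) 1 4 V E A" "card V = 6*0+6" using odd_constr by blast
  show "mixed_cage_order 1 1 4 = 6" unfolding mixed_cage_order_def
  proof (rule Least_equality)
    show "\<exists>V E A. zrg_mixed_graph 1 1 4 V E A \<and> card V = 6" using G by auto
  next
    fix y assume "\<exists>V E A. zrg_mixed_graph 1 1 4 V E A \<and> card V = y"
    then show "6 \<le> y" using lb1 by blast
  qed
next
  obtain V E A where G: "zrg_mixed_graph (2*1) 1 4 V E A" "card V = 6*1+2" using even_constr[of 1] by auto
  show "mixed_cage_order 2 1 4 = 8" unfolding mixed_cage_order_def
  proof (rule Least_equality)
    show "\<exists>V E A. zrg_mixed_graph 2 1 4 V E A \<and> card V = 8" using G by auto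
  next
    fix y assume "\<exists>V E A. zrg_mixed_graph 2 1 4 V E A \<and> card V = y"
    then show "8 \<le> y" using lb2 by blast
  qed
qed

end
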